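(* There exists a strictly increasing sequence $(n_k)_{k\ge0}$ of positive integers with $n_{k+1}/n_k\to1$ as $k\to\infty$ which is a rigidity sequence; i.e. there is a continuous Borel probability measure $\sigma$ on $\mathbb{T}$ with $\hat\sigma(n_k)\to1$.
   Context: $\hat\sigma(n)=\int_{\mathbb{T}}\lambda^n\,d\sigma(\lambda)$; continuous means atomless. A strictly increasing sequence $(n_k)$ of positive integers is a rigidity sequence if there exist a probability space and a measure-preserving transformation $\varphi$ that is weakly mixing and rigid with respect to $(n_k)$ (i.e. $\mu(\varphi^{-n_k}(A)\triangle A)\to0$ for all measurable $A$); equivalently, if there is a continuous probability measure $\sigma$ on $\mathbb{T}$ with $\hat\sigma(n_k)\to1$. *)

theory Defs
  imports "HOL-Probability.Probability"
begin

text \<open>The circle group T is represented as the unit circle in the complex plane.\<close>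

definition circle_prob_measure :: "complex measure \<Rightarrow> bool" where
  "circle_prob_measure \<sigma> \<longleftrightarrow>
     prob_space \<sigma> \<and> sets \<sigma> = sets borel \<and> emeasure \<sigma> (sphere 0 1) = 1"

text \<open>Continuous = atomless.\<close>
definition continuous_measure :: "complex measure \<Rightarrow> bool" where
  "continuous_measure \<sigma> \<longleftrightarrow> (\<forall>z. emeasure \<sigma> {z} = 0)"

definition fourier_coeff :: "complex measure \<Rightarrow> nat \<Rightarrow> complex" where
  "fourier_coeff \<sigma> n = (\<integral>z. z ^ n \<partial>\<sigma>)"

definition rigidity_sequence :: "(nat \<Rightarrow> nat) \<Rightarrow> bool" where
  "rigidity_sequence nk \<longleftrightarrow> strict_mono nk \<and> (\<forall>k. 0 < nk k) \<and>
     (\<exists>\<sigma>. circle_prob_measure \<sigma> \<and> continuous_measure \<sigma> \<and>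
          (\<lambda>k. fourier_coeff \<sigma> (nk k)) \<longlonglongrightarrow> 1)"

end

theory Submission
  imports Defs
begin


primrec Mx :: "nat \<Rightarrow> nat" where
  "Mx 0 = 4" | "Mx (Suc l) = Mx l * 2^(2*l+3)"

lemma Mx_pos: "0 < Mx l" by (induction l) auto

lemma Mx_ge: "2^l * Mx j \<le> Mx (l + j)"
proof (induction l)
  case 0 then show ?case by simp
next
  case (Suc l)
  have h: "(2::nat) \<le> 2^(2*(l+j)+3)"
    using power_increasing[of 1 "2*(l+j)+3" "2::nat"] by simp
  have "2^l * Mx j * 2 \<le> Mx (l+j) * 2^(2*(l+j)+3)" by (rule mult_le_mono[OF Suc h])
  then show ?case by (simp add: mult.commute mult.left_commute)
qed

lemma Mx_dvd: "l \<le> j \<Longrightarrow> Mx l dvd Mx j"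
proof (induction j)
  case 0 then show ?case by simp
next
  case (Suc j)
  then show ?case by (cases "l = Suc j") (auto simp: le_Suc_eq)
qed

definition tt :: "nat \<Rightarrow> (nat \<Rightarrow> bool) \<Rightarrow> real" where
  "tt l \<omega> = (if \<omega> l then 1 / real (Mx l) else 0)"

lemma tt_nonneg: "0 \<le> tt l \<omega>" by (simp add: tt_def)

lemma tt_le: "tt (l + j) \<omega> \<le> (1/2)^l / real (Mx j)"
proof -
  have "real (2^l * Mx j) \<le> real (Mx (l+j))" using Mx_ge[of l j] by linarith
  moreover have "0 < real (2^l * Mx j)" using Mx_pos[of j] by simp
  ultimately have "1 / real (Mx (l+j)) \<le> 1 / real (2^l * Mx j)"
    by (intro frac_le) auto
  also have "\<dots> = (1/2)^l / real (Mx j)" by (simp add: power_divide)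
  finally show ?thesis by (simp add: tt_def)
qed

lemma summable_tt_shift: "summable (\<lambda>l. tt (l + j) \<omega>)"
  by (rule summable_comparison_test'[where g="\<lambda>l. (1/2)^l / real (Mx j)" and N=0])
     (auto simp: tt_nonneg tt_le intro!: summable_divide)

lemma summable_tt: "summable (\<lambda>l. tt l \<omega>)"
  using summable_tt_shift[of 0 \<omega>] by simp

lemma tail_le: "(\<Sum>l. tt (l + j) \<omega>) \<le> 2 / real (Mx j)"
proof -
  have "(\<Sum>l. tt (l + j) \<omega>) \<le> (\<Sum>l. (1/2)^l / real (Mx j))"
    by (intro suminf_le summable_tt_shift tt_le summable_divide summable_geometric) auto
  also have "\<dots> = 2 / real (Mx j)" by (simp add: suminf_divide suminf_geometric)
  finally show ?thesis .
qed

lemma tail_nonneg: "0 \<le> (\<Sum>l. tt (l + j) \<omega>)"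
  by (intro suminf_nonneg summable_tt_shift tt_nonneg)

definition phi :: "(nat \<Rightarrow> bool) \<Rightarrow> real" where
  "phi \<omega> = (\<Sum>l. tt l \<omega>)"

lemma phi_split: "phi \<omega> = (\<Sum>l<j. tt l \<omega>) + tt j \<omega> + (\<Sum>l. tt (l + Suc j) \<omega>)"
proof -
  have "phi \<omega> = (\<Sum>l. tt (l + Suc j) \<omega>) + (\<Sum>l<Suc j. tt l \<omega>)"
    unfolding phi_def by (rule suminf_split_initial_segment[OF summable_tt])
  then show ?thesis by simp
qed

lemma phi_bounds: "0 \<le> phi \<omega> \<and> phi \<omega> \<le> 1/2"
proof -
  have "phi \<omega> \<le> 2 / real (Mx 0)" using tail_le[of 0 \<omega>] by (simp add: phi_def)
  moreover have "0 \<le> phi \<omega>" unfolding phi_def by (intro suminf_nonneg summable_tt tt_nonneg)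
  ultimately show ?thesis by simp
qed

lemma phi_inj: assumes "\<omega> \<noteq> \<omega>'" shows "phi \<omega> \<noteq> phi \<omega>'"
proof -
  obtain j where j: "\<omega> j \<noteq> \<omega>' j" using assms by auto
  define j0 where "j0 = (LEAST j. \<omega> j \<noteq> \<omega>' j)"
  have j0: "\<omega> j0 \<noteq> \<omega>' j0" unfolding j0_def by (rule LeastI[of _ j]) (rule j)
  have lt: "\<And>l. l < j0 \<Longrightarrow> \<omega> l = \<omega>' l" unfolding j0_def using not_less_Least by blast
  have s: "(\<Sum>l<j0. tt l \<omega>) = (\<Sum>l<j0. tt l \<omega>')" by (intro sum.cong) (auto simp: tt_def lt)
  have t1: "0 \<le> (\<Sum>l. tt (l + Suc j0) \<omega>)" "(\<Sum>l. tt (l + Suc j0) \<omega>) \<le> 2 / real (Mx (Suc j0))"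
    by (rule tail_nonneg, rule tail_le)
  have t2: "0 \<le> (\<Sum>l. tt (l + Suc j0) \<omega>')" "(\<Sum>l. tt (l + Suc j0) \<omega>') \<le> 2 / real (Mx (Suc j0))"
    by (rule tail_nonneg, rule tail_le)
  have "Mx (Suc j0) \<ge> 4 * Mx j0" 
  proof -
    have "(4::nat) \<le> 2^(2*j0+3)"
      using power_increasing[of 2 "2*j0+3" "2::nat"] by simp
    then show ?thesis using Mx_pos[of j0] by simp
  qed
  then have "real (4 * Mx j0) \<le> real (Mx (Suc j0))" by (rule of_nat_mono)
  then have "real (Mx (Suc j0)) \<ge> 4 * real (Mx j0)" by simp
  then have b2: "2 / real (Mx (Suc j0)) \<le> 1 / (2 * real (Mx j0))"
    using Mx_pos[of j0] by (simp add: field_simps)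
  have "tt j0 \<omega> \<noteq> tt j0 \<omega>'" using j0 Mx_pos[of j0] by (auto simp: tt_def)
  then have "\<bar>tt j0 \<omega> - tt j0 \<omega>'\<bar> = 1 / real (Mx j0)" using j0 by (auto simp: tt_def)
  define c where "c = 1 / real (Mx j0)"
  have cpos: "0 < c" using Mx_pos[of j0] by (simp add: c_def)
  have b3: "2 / real (Mx (Suc j0)) \<le> c / 2" using b2 by (simp add: c_def)
  have ab: "\<bar>tt j0 \<omega> - tt j0 \<omega>'\<bar> = c" using \<open>\<bar>tt j0 \<omega> - tt j0 \<omega>'\<bar> = 1 / real (Mx j0)\<close> by (simp add: c_def)
  show ?thesis
  proof
    assume "phi \<omega> = phi \<omega>'"
    then have "tt j0 \<omega> - tt j0 \<omega>' = (\<Sum>l. tt (l + Suc j0) \<omega>') - (\<Sum>l. tt (l + Suc j0) \<omega>)"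
      using phi_split[of \<omega> j0] phi_split[of \<omega>' j0] s by linarith
    then show False using ab t1 t2 b3 cpos by linarith
  qed
qed


lemma cis_bound: "cmod (1 - cis y) \<le> \<bar>y\<bar>"
proof -
  have "cmod (exp (\<i> * complex_of_real y) - (\<Sum>k \<le> 0. (\<i> * y)^k / fact k)) \<le> \<bar>y\<bar>^(Suc 0) / fact (Suc 0)"
    by (rule iexp_approx1)
  then have "cmod (cis y - 1) \<le> \<bar>y\<bar>" by (simp add: cis_conv_exp)
  then show ?thesis by (simp add: norm_minus_commute)
qed

definition pp :: "nat \<Rightarrow> real" where "pp l = 1 / real (l + 2)"
definition Mf :: "nat \<Rightarrow> bool measure" where "Mf l = measure_pmf (bernoulli_pmf (pp l))"
definition Om :: "(nat \<Rightarrow> bool) measure" where "Om = PiM UNIV Mf"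
definition FF :: "(nat \<Rightarrow> bool) \<Rightarrow> complex" where "FF \<omega> = cis (2 * pi * phi \<omega>)"
definition sig :: "complex measure" where "sig = distr Om borel FF"

lemma pp_bounds: "0 \<le> pp l" "pp l \<le> 1/2"
  by (auto simp: pp_def)

lemma PP: "product_prob_space Mf"
  unfolding product_prob_space_def product_prob_space_axioms_def product_sigma_finite_def
  by (auto simp: Mf_def prob_space_measure_pmf prob_space_imp_sigma_finite)

lemma prob_Om: "prob_space Om"
  unfolding Om_def Mf_def by (intro prob_space_PiM prob_space_measure_pmf)

lemma space_Om: "space Om = UNIV"
  by (simp add: Om_def space_PiM Mf_def)

lemma meas_tt: "(\<lambda>\<omega>. tt l \<omega>) \<in> borel_measurable Om"
proof -
  have a: "(\<lambda>\<omega>. \<omega> l) \<in> measurable Om (Mf l)" unfolding Om_def by (rule measurable_component_singleton) simp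
  have b: "(\<lambda>b. if b then 1/real(Mx l) else 0) \<in> borel_measurable (Mf l)" by (simp add: Mf_def)
  show ?thesis using measurable_compose[OF a b] by (simp add: tt_def)
qed

lemma meas_phi: "(\<lambda>\<omega>. phi \<omega>) \<in> borel_measurable Om"
  unfolding phi_def by (rule borel_measurable_suminf) (rule meas_tt)

lemma meas_FF: "FF \<in> borel_measurable Om"
proof -
  have "(\<lambda>\<omega>. cis (2 * pi * phi \<omega>)) \<in> borel_measurable Om"
    by (rule borel_measurable_continuous_on[where f="\<lambda>x. cis (2*pi*x)", OF _ meas_phi])
       (intro continuous_intros)
  then show ?thesis by (simp add: FF_def[abs_def])
qed

lemma circ_sig: "circle_prob_measure sig"
proof -
  interpret prob_space Om by (rule prob_Om)
  have "prob_space sig" unfolding sig_def by (rule prob_space_distr) (rule meas_FF)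
  moreover have "sets sig = sets borel" by (simp add: sig_def)
  moreover have "emeasure sig (sphere 0 1) = 1"
  proof -
    have "sphere (0::complex) 1 \<in> sets borel" by (simp add: borel_closed)
    then have "emeasure sig (sphere 0 1) = emeasure Om (FF -` sphere 0 1 \<inter> space Om)"
      unfolding sig_def by (rule emeasure_distr[OF meas_FF])
    also have "FF -` sphere 0 1 \<inter> space Om = space Om" by (auto simp: FF_def)
    finally show ?thesis by (simp add: emeasure_space_1)
  qed
  ultimately show ?thesis by (simp add: circle_prob_measure_def)
qed

lemma FF_inj: assumes "FF \<omega> = FF \<omega>'" shows "\<omega> = \<omega>'"
proof (rule ccontr)
  assume ne: "\<omega> \<noteq> \<omega>'"
  have "cis (2*pi*phi \<omega>) / cis (2*pi*phi \<omega>') = 1" using assms by (simp add: FF_def)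
  then have "cis (2*pi*(phi \<omega> - phi \<omega>')) = 1" by (simp add: cis_divide right_diff_distrib)
  then have "cos (2*pi*(phi \<omega> - phi \<omega>')) = 1" by (metis cis.simps(1) one_complex.simps(1))
  then obtain n :: int where n: "2*pi*(phi \<omega> - phi \<omega>') = n * 2 * pi" by (auto simp: cos_one_2pi_int)
  then have d: "phi \<omega> - phi \<omega>' = n" by simp
  have "\<bar>phi \<omega> - phi \<omega>'\<bar> \<le> 1/2" using phi_bounds[of \<omega>] phi_bounds[of \<omega>'] by linarith
  then have "\<bar>real_of_int n\<bar> < 1" using d by simp
  then have "n = 0" by linarith
  then show False using d phi_inj[OF ne] by simp
qed

lemma sets_coord: "{x \<in> space Om. x l \<in> A} \<in> sets Om"
proof -
  have "(\<lambda>x. x l) -` A \<inter> space Om \<in> sets Om"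
    using measurable_sets[OF measurable_component_singleton[of l UNIV Mf], of A]
    by (simp add: Om_def Mf_def)
  moreover have "(\<lambda>x. x l) -` A \<inter> space Om = {x \<in> space Om. x l \<in> A}" by auto
  ultimately show ?thesis by simp
qed

lemma telescope: "(\<Prod>l<L. 1 - pp l) = 1 / real (Suc L)"
proof (induction L)
  case 0 then show ?case by simp
next
  case (Suc L)
  then show ?case by (simp add: pp_def field_simps)
qed

lemma single_small: "emeasure Om {x\<in>space Om. \<forall>l\<in>{..<L}. x l \<in> {\<omega>0 l}} \<le> ennreal (1 / real (Suc L))"
proof -
  interpret product_prob_space Mf UNIV by (rule PP)
  have "emeasure Om {x\<in>space Om. \<forall>l\<in>{..<L}. x l \<in> {\<omega>0 l}} = (\<Prod>l\<in>{..<L}. emeasure (Mf l) {\<omega>0 l})"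
    unfolding Om_def by (rule emeasure_PiM_Collect) (auto simp: Mf_def)
  also have "\<dots> = (\<Prod>l\<in>{..<L}. ennreal (pmf (bernoulli_pmf (pp l)) (\<omega>0 l)))"
    by (simp add: Mf_def emeasure_pmf_single)
  also have "\<dots> = ennreal (\<Prod>l\<in>{..<L}. pmf (bernoulli_pmf (pp l)) (\<omega>0 l))"
    by (simp add: prod_ennreal)
  also have "\<dots> \<le> ennreal (\<Prod>l\<in>{..<L}. 1 - pp l)"
  proof (intro ennreal_leI prod_mono conjI)
    fix l
    show "0 \<le> pmf (bernoulli_pmf (pp l)) (\<omega>0 l)" by simp
    show "pmf (bernoulli_pmf (pp l)) (\<omega>0 l) \<le> 1 - pp l"
      using pp_bounds[of l] by (cases "\<omega>0 l") auto
  qed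
  finally show ?thesis by (simp add: telescope)
qed

lemma cont_sig: "continuous_measure sig"
  unfolding continuous_measure_def
proof
  fix z :: complex
  have "{z} \<in> sets borel" by simp
  then have e: "emeasure sig {z} = emeasure Om (FF -` {z} \<inter> space Om)"
    unfolding sig_def by (rule emeasure_distr[OF meas_FF])
  show "emeasure sig {z} = 0"
  proof (cases "FF -` {z} \<inter> space Om = {}")
    case True then show ?thesis using e by simp
  next
    case False
    then obtain \<omega>0 where w0: "FF \<omega>0 = z" by auto
    have sub: "FF -` {z} \<inter> space Om \<subseteq> {x\<in>space Om. \<forall>l\<in>{..<L}. x l \<in> {\<omega>0 l}}" for L
      using FF_inj w0 by auto
    have "\<forall>L. emeasure sig {z} \<le> ennreal (1 / real (Suc L))"
    proof
      fix L
      have "{x\<in>space Om. \<forall>l\<in>{..<L}. x l \<in> {\<omega>0 l}} \<in> sets Om"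
        by (intro sets.sets_Collect_finite_All sets_coord) auto
      then have "emeasure Om (FF -` {z} \<inter> space Om) \<le> emeasure Om {x\<in>space Om. \<forall>l\<in>{..<L}. x l \<in> {\<omega>0 l}}"
        by (rule emeasure_mono[OF sub])
      then show "emeasure sig {z} \<le> ennreal (1 / real (Suc L))" using single_small[of L \<omega>0] e by simp
    qed
    moreover have "(\<lambda>L. ennreal (1 / real (Suc L))) \<longlonglongrightarrow> ennreal 0"
      by (intro tendsto_ennrealI) (use LIMSEQ_inverse_real_of_nat in \<open>simp add: inverse_eq_divide\<close>)
    ultimately have "emeasure sig {z} \<le> ennreal 0"
      by (intro LIMSEQ_le_const) auto
    then show ?thesis by simp
  qed
qed


lemma measure_S: "measure Om {x \<in> space Om. x (Suc i) \<in> {True}} = pp (Suc i)"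
proof -
  interpret product_prob_space Mf UNIV by (rule PP)
  have "emeasure Om {x \<in> space Om. x (Suc i) \<in> {True}} = emeasure (Mf (Suc i)) {True}"
    unfolding Om_def by (rule emeasure_PiM_Collect_single) (auto simp: Mf_def)
  also have "\<dots> = ennreal (pp (Suc i))"
    using pp_bounds[of "Suc i"] by (simp add: Mf_def emeasure_pmf_single)
  finally show ?thesis using pp_bounds[of "Suc i"] by (simp add: measure_def)
qed

lemma fourier_bound:
  assumes dv: "Mx i dvd n"
  shows "cmod (1 - fourier_coeff sig n) \<le> 2 * pp (Suc i) + 2*pi*real n*(2 / real (Mx (Suc (Suc i))))"
proof -
  interpret prob_space Om by (rule prob_Om)
  define c where "c = 2*pi*real n*(2 / real (Mx (Suc (Suc i))))"
  have c0: "0 \<le> c" unfolding c_def by simp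
  define g where "g \<omega> = cis (real n * (2*pi*phi \<omega>))" for \<omega>
  define S where "S = {x \<in> space Om. x (Suc i) \<in> {True}}"
  have Ssets: "S \<in> sets Om" unfolding S_def by (rule sets_coord)
  have mg: "g \<in> borel_measurable Om"
  proof -
    have "(\<lambda>\<omega>. cis (real n * (2*pi*phi \<omega>))) \<in> borel_measurable Om"
      by (rule borel_measurable_continuous_on[where f="\<lambda>x. cis (real n*(2*pi*x))", OF _ meas_phi])
         (intro continuous_intros)
    then show ?thesis by (simp add: g_def[abs_def])
  qed
  have ig: "integrable Om g" by (rule integrable_const_bound[where B=1]) (auto simp: g_def mg)
  have fc: "fourier_coeff sig n = integral\<^sup>L Om g"
  proof -
    have "fourier_coeff sig n = (\<integral>\<omega>. (FF \<omega>)^n \<partial>Om)"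
      unfolding fourier_coeff_def sig_def
      by (rule integral_distr[OF meas_FF]) (intro borel_measurable_continuous_onI continuous_intros)
    then show ?thesis by (simp add: FF_def g_def[abs_def] Complex.DeMoivre)
  qed
  have i1: "integrable Om (\<lambda>\<omega>. 1 :: complex)" by simp
  have "1 - fourier_coeff sig n = (\<integral>\<omega>. 1 - g \<omega> \<partial>Om)"
    using ig i1 by (simp add: fc prob_space)
  then have "cmod (1 - fourier_coeff sig n) = norm (\<integral>\<omega>. 1 - g \<omega> \<partial>Om)" by simp
  also have "\<dots> \<le> (\<integral>\<omega>. norm (1 - g \<omega>) \<partial>Om)" by (rule integral_norm_bound)
  also have "\<dots> \<le> (\<integral>\<omega>. 2 * indicator S \<omega> + c \<partial>Om)"
  proof (rule integral_mono)
    show "integrable Om (\<lambda>\<omega>. norm (1 - g \<omega>))" using ig i1 by (intro integrable_norm) simp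
    show "integrable Om (\<lambda>\<omega>. 2 * indicator S \<omega> + c)"
      using Ssets by (intro Bochner_Integration.integrable_add integrable_mult_right integrable_real_indicator) (auto simp: less_top[symmetric])
    fix \<omega> assume "\<omega> \<in> space Om"
    show "norm (1 - g \<omega>) \<le> 2 * indicator S \<omega> + c"
    proof (cases "\<omega> (Suc i)")
      case True
      then have "indicator S \<omega> = (1::real)" by (simp add: S_def space_Om)
      moreover have "norm (1 - g \<omega>) \<le> norm (1::complex) + norm (g \<omega>)" by (rule norm_triangle_ineq4)
      ultimately show ?thesis using c0 by (simp add: g_def)
    next
      case False
      then have ind: "indicator S \<omega> = (0::real)" by (simp add: S_def space_Om)
      define T where "T = (\<Sum>l. tt (l + Suc (Suc i)) \<omega>)"
      define m where "m = (\<Sum>l<Suc i. if \<omega> l then n div Mx l else 0)"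
      have "real n * (\<Sum>l<Suc i. tt l \<omega>) = (\<Sum>l<Suc i. real n * tt l \<omega>)" by (rule sum_distrib_left)
      also have "\<dots> = (\<Sum>l<Suc i. real (if \<omega> l then n div Mx l else 0))"
      proof (rule sum.cong)
        fix l assume "l \<in> {..<Suc i}"
        then have "Mx l dvd n" using Mx_dvd[of l i] dv by (auto intro: dvd_trans)
        then show "real n * tt l \<omega> = real (if \<omega> l then n div Mx l else 0)"
          by (simp add: tt_def real_of_nat_div)
      qed simp
      also have "\<dots> = real m" by (simp add: m_def)
      finally have nm: "real n * (\<Sum>l<Suc i. tt l \<omega>) = real m" .
      have ph: "phi \<omega> = (\<Sum>l<Suc i. tt l \<omega>) + T"
        using phi_split[of \<omega> "Suc i"] False by (simp add: tt_def T_def)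
      have "real n * (2*pi*phi \<omega>) = 2*pi*(real n * (\<Sum>l<Suc i. tt l \<omega>)) + 2*pi*(real n * T)"
        unfolding ph by (simp add: algebra_simps del: sum.lessThan_Suc)
      then have "real n * (2*pi*phi \<omega>) = 2*pi*real m + 2*pi*(real n * T)"
        by (simp only: nm)
      then have "g \<omega> = cis (2*pi*real m + 2*pi*(real n * T))"
        by (simp add: g_def)
      also have "\<dots> = cis (2*pi*real m) * cis (2*pi*(real n * T))"
        by (rule cis_mult[symmetric])
      also have "cis (2*pi*real m) = 1" by (rule cis_multiple_2pi) simp
      finally have ge: "g \<omega> = cis (2*pi*(real n * T))" by simp
      have T0: "0 \<le> T" "T \<le> 2 / real (Mx (Suc (Suc i)))" unfolding T_def by (rule tail_nonneg, rule tail_le)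
      have "norm (1 - g \<omega>) \<le> \<bar>2*pi*(real n * T)\<bar>" unfolding ge by (rule cis_bound)
      also have "\<dots> = 2*pi*real n * T" using T0 by simp
      also have "\<dots> \<le> c" unfolding c_def using T0 by (intro mult_left_mono) auto
      finally show ?thesis using ind by simp
    qed
  qed
  also have "(\<integral>\<omega>. 2 * indicator S \<omega> + c \<partial>Om) = 2 * measure Om S + c"
  proof -
    have ii: "integrable Om (\<lambda>\<omega>. 2 * indicator S \<omega> :: real)"
      using Ssets by (intro integrable_mult_right integrable_real_indicator) (auto simp: less_top[symmetric])
    have "(\<integral>\<omega>. 2 * indicator S \<omega> + c \<partial>Om) = (\<integral>\<omega>. 2 * indicator S \<omega> \<partial>Om) + (\<integral>\<omega>. c \<partial>Om)"
      by (rule Bochner_Integration.integral_add[OF ii]) simp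
    also have "(\<integral>\<omega>. 2 * indicator S \<omega> \<partial>Om) = 2 * (\<integral>\<omega>. indicator S \<omega> \<partial>Om :: real)"
      by (rule integral_mult_right_zero)
    also have "(\<integral>\<omega>. indicator S \<omega> \<partial>Om :: real) = measure Om S"
      using Ssets by (simp add: space_Om)
    also have "(\<integral>\<omega>. c \<partial>Om) = c" by (simp add: prob_space)
    finally show ?thesis .
  qed
  also have "\<dots> = 2 * pp (Suc i) + c" unfolding S_def by (subst measure_S) (rule refl)
  finally show ?thesis by (simp add: c_def)
qed


definition bb :: "nat \<Rightarrow> nat" where "bb i = 2^i * Mx i"

primrec st :: "nat \<Rightarrow> nat \<times> nat" where
  "st 0 = (0, bb 0)"
| "st (Suc k) = (if snd (st k) + Mx (fst (st k)) = bb (Suc (fst (st k)))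
                 then (Suc (fst (st k)), snd (st k) + Mx (fst (st k)))
                 else (fst (st k), snd (st k) + Mx (fst (st k))))"

definition lv :: "nat \<Rightarrow> nat" where "lv k = fst (st k)"
definition nseq :: "nat \<Rightarrow> nat" where "nseq k = snd (st k)"

lemma nseq_Suc: "nseq (Suc k) = nseq k + Mx (lv k)"
  by (simp add: nseq_def lv_def)

lemma lv_Suc: "lv (Suc k) = (if nseq k + Mx (lv k) = bb (Suc (lv k)) then Suc (lv k) else lv k)"
  by (simp add: nseq_def lv_def)

lemma bb_less: "bb i < bb (Suc i)"
proof -
  have "Mx i \<le> Mx i * 2^(2*i+3)" using Mx_pos[of i] by simp
  then have "2^i * Mx i < 2^Suc i * (Mx i * 2^(2*i+3))" using Mx_pos[of i]
    by (simp add: mult_le_mono2 less_le_trans[of _ "2 ^ Suc i * Mx i"])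
  then show ?thesis by (simp add: bb_def)
qed

lemma bb_mono: "i \<le> j \<Longrightarrow> bb i \<le> bb j"
  by (induction j) (auto simp: le_Suc_eq intro: order_trans less_imp_le[OF bb_less])

lemma Mx_dvd_bb: "Mx i dvd bb (Suc i)" by (simp add: bb_def)

lemma dvd_step: fixes a n b :: nat assumes "a dvd n" "a dvd b" "n < b" shows "n + a \<le> b"
proof -
  obtain x y where x: "n = a * x" and y: "b = a * y" using assms(1,2) by (auto elim!: dvdE)
  then have "x < y" using assms(3) by (metis mult_less_cancel1)
  then have "a * (x + 1) \<le> a * y" by (intro mult_le_mono2) simp
  then show ?thesis using x y by simp
qed

lemma inv: "Mx (lv k) dvd nseq k \<and> bb (lv k) \<le> nseq k \<and> nseq k < bb (Suc (lv k))"
proof (induction k)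
  case 0
  show ?case using bb_less[of 0] by (simp add: lv_def nseq_def bb_def)
next
  case (Suc k)
  define i where "i = lv k"
  define n where "n = nseq k"
  have I: "Mx i dvd n" "bb i \<le> n" "n < bb (Suc i)" using Suc by (auto simp: i_def n_def)
  have le: "n + Mx i \<le> bb (Suc i)" by (rule dvd_step[OF I(1) Mx_dvd_bb I(3)])
  show ?case
  proof (cases "n + Mx i = bb (Suc i)")
    case True
    then have "lv (Suc k) = Suc i" "nseq (Suc k) = bb (Suc i)"
      by (simp_all add: lv_Suc nseq_Suc i_def n_def)
    then show ?thesis using bb_less[of "Suc i"] by (simp add: bb_def)
  next
    case False
    then have "lv (Suc k) = i" "nseq (Suc k) = n + Mx i"
      by (simp_all add: lv_Suc nseq_Suc i_def n_def)
    then show ?thesis using I le False by auto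
  qed
qed

lemma nseq_mono: "strict_mono nseq"
  unfolding strict_mono_Suc_iff using Mx_pos by (simp add: nseq_Suc)

lemma nseq_pos: "0 < nseq k"
proof -
  have "0 < bb (lv k)" using Mx_pos by (simp add: bb_def)
  then show ?thesis using inv[of k] by linarith
qed

lemma lv_lim: "filterlim lv at_top sequentially"
  unfolding filterlim_at_top eventually_sequentially
proof (intro allI exI allI impI)
  fix I k assume k: "bb I \<le> k"
  show "I \<le> lv k"
  proof (rule ccontr)
    assume "\<not> I \<le> lv k"
    then have "Suc (lv k) \<le> I" by simp
    then have "nseq k < bb I" using inv[of k] bb_mono[of "Suc (lv k)" I] by linarith
    moreover have "k \<le> nseq k" by (rule seq_suble[OF nseq_mono])
    ultimately show False using k by linarith
  qed
qed

lemma ratio_bound: "\<bar>real (nseq (Suc k)) / real (nseq k) - 1\<bar> \<le> (1/2)^(lv k)"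
proof -
  define i where "i = lv k"
  define n where "n = nseq k"
  have np: "0 < real n" using nseq_pos[of k] by (simp add: n_def)
  have bn: "real (2^i * Mx i) \<le> real n" using inv[of k] by (simp add: i_def n_def bb_def del: of_nat_mult of_nat_power)
  have "real (nseq (Suc k)) / real n - 1 = real (Mx i) / real n"
    using np by (simp add: nseq_Suc i_def n_def field_simps)
  moreover have "real (Mx i) / real n \<le> real (Mx i) / real (2^i * Mx i)"
    using bn Mx_pos[of i] by (intro frac_le) auto
  moreover have "real (Mx i) / real (2^i * Mx i) = (1/2)^i"
    using Mx_pos[of i] by (simp add: power_divide)
  moreover have "0 \<le> real (Mx i) / real n" using np by simp
  ultimately show ?thesis by (simp add: n_def i_def)
qed

lemma four_bound2: "cmod (fourier_coeff sig (nseq k) - 1) \<le> 2 * inverse (real (Suc (lv k))) + 4*pi*(1/2)^(lv k)"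
proof -
  define i where "i = lv k"
  define n where "n = nseq k"
  have dv: "Mx i dvd n" and nb: "n < bb (Suc i)" using inv[of k] by (auto simp: i_def n_def)
  have fb: "cmod (1 - fourier_coeff sig n) \<le> 2 * pp (Suc i) + 2*pi*real n*(2 / real (Mx (Suc (Suc i))))"
    by (rule fourier_bound[OF dv])
  have p: "pp (Suc i) \<le> inverse (real (Suc i))" by (simp add: pp_def inverse_eq_divide frac_le)
  have nat1: "bb (Suc i) * 2^i \<le> Mx (Suc (Suc i))"
  proof -
    have "(2::nat)^(Suc i) * 2^i = 2^(Suc i + i)" by (rule power_add[symmetric])
    also have "\<dots> \<le> 2^(2*Suc i + 3)" by (rule power_increasing) auto
    finally have "(2::nat)^(Suc i) * 2^i \<le> 2^(2*Suc i + 3)" .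
    then have "2^(Suc i) * 2^i * Mx (Suc i) \<le> 2^(2*Suc i + 3) * Mx (Suc i)" by (rule mult_le_mono1)
    then show ?thesis by (simp add: bb_def mult.commute mult.left_commute)
  qed
  have "real n * 2^i \<le> real (Mx (Suc (Suc i)))"
  proof -
    have "n * 2^i \<le> bb (Suc i) * 2^i" using nb by simp
    then have "n * 2^i \<le> Mx (Suc (Suc i))" using nat1 by linarith
    then have "real (n * 2^i) \<le> real (Mx (Suc (Suc i)))" by (rule of_nat_mono)
    then show ?thesis by simp
  qed
  then have "real n / real (Mx (Suc (Suc i))) \<le> (1/2)^i"
    using Mx_pos[of "Suc (Suc i)"] by (simp add: field_simps power_divide)
  then have q: "(4*pi) * (real n / real (Mx (Suc (Suc i)))) \<le> (4*pi) * (1/2)^i"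
    using pi_gt_zero by (intro mult_left_mono) auto
  have "2*pi*real n*(2 / real (Mx (Suc (Suc i)))) = (4*pi) * (real n / real (Mx (Suc (Suc i))))"
    by (simp del: Mx.simps)
  then have "2*pi*real n*(2 / real (Mx (Suc (Suc i)))) \<le> 4*pi*(1/2)^i" using q by simp
  then show ?thesis using fb p by (simp add: norm_minus_commute i_def n_def)
qed

lemma four_lim: "(\<lambda>k. fourier_coeff sig (nseq k)) \<longlonglongrightarrow> 1"
proof (rule LIM_zero_cancel)
  define G where "G i = 2 * inverse (real (Suc i)) + 4*pi*(1/2)^i" for i
  have "G \<longlonglongrightarrow> 2 * 0 + 4*pi*0" unfolding G_def
    by (intro tendsto_intros LIMSEQ_inverse_real_of_nat LIMSEQ_realpow_zero) auto
  then have "G \<longlonglongrightarrow> 0" by simp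
  then have "(\<lambda>k. G (lv k)) \<longlonglongrightarrow> 0" by (rule filterlim_compose[OF _ lv_lim])
  then show "(\<lambda>k. fourier_coeff sig (nseq k) - 1) \<longlonglongrightarrow> 0"
    by (rule Lim_null_comparison[rotated]) (use four_bound2 in \<open>auto simp: G_def\<close>)
qed

lemma ratio_lim: "(\<lambda>k. real (nseq (Suc k)) / real (nseq k)) \<longlonglongrightarrow> 1"
proof (rule LIM_zero_cancel)
  have "(\<lambda>i. (1/2::real)^i) \<longlonglongrightarrow> 0" by (rule LIMSEQ_realpow_zero) auto
  then have "(\<lambda>k. (1/2::real)^(lv k)) \<longlonglongrightarrow> 0" by (rule filterlim_compose[OF _ lv_lim])
  then show "(\<lambda>k. real (nseq (Suc k)) / real (nseq k) - 1) \<longlonglongrightarrow> 0"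
    by (rule Lim_null_comparison[rotated]) (use ratio_bound in auto)
qed

theorem mainTheorem16:
  shows "\<exists>nk :: nat \<Rightarrow> nat. strict_mono nk \<and> (\<forall>k. 0 < nk k) \<and>
           (\<lambda>k. real (nk (Suc k)) / real (nk k)) \<longlonglongrightarrow> 1 \<and>
           rigidity_sequence nk"
  using nseq_mono nseq_pos ratio_lim circ_sig cont_sig four_lim
  unfolding rigidity_sequence_def by blast

end
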